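(* Let $\beta\in(0,1)$, $d\in\{1,2,3\}$, and for $k\in\mathbb N\cup\{0\}$ define $a_k^d(\beta):=\mathbb E\big(D_1^{-\beta(k-\frac d4)}\big)=\int_0^\infty w^{-\beta(k-\frac d4)}g_\beta(w)\,dw$. Then for every integer $k\ge 1$, $$\frac{a_k^d(\beta)\sqrt{\Gamma\big(1+\beta(2k-\frac d2)\big)}}{k!}\le\frac{3\sqrt{2\beta(k-\frac d4)}\sqrt{\Gamma\big(2\beta(1-\frac d4)\big)}}{\Gamma(1+\beta)}\,2^{\beta(k-1)}.$$
   Context: $D_1$ is a positive $\beta$-stable random variable with Laplace transform $\mathbb E e^{-sD_1}=e^{-s^\beta}$, and $g_\beta$ denotes its density. *)

theory Defs
  imports "HOL-Analysis.Analysis"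
begin

text \<open>g is the density (on (0,\<infinity>)) of a positive beta-stable random variable D_1,
  characterised by its Laplace transform: E exp(-s D_1) = exp(-s^beta) for all s \<ge> 0.\<close>
definition positive_stable_density :: "real \<Rightarrow> (real \<Rightarrow> real) \<Rightarrow> bool" where
  "positive_stable_density \<beta> g \<longleftrightarrow>
     g \<in> borel_measurable lborel \<and>
     (\<forall>w. g w \<ge> 0) \<and> (\<forall>w\<le>0. g w = 0) \<and>
     (\<forall>s\<ge>0. set_integrable lborel {0<..} (\<lambda>w. exp (- s * w) * g w) \<and>
        (LINT w:{0<..}|lborel. exp (- s * w) * g w) = exp (- (s powr \<beta>)))"

definition stable_moment_a :: "(real \<Rightarrow> real) \<Rightarrow> real \<Rightarrow> nat \<Rightarrow> nat \<Rightarrow> real" where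
  "stable_moment_a g \<beta> d k =
     (LINT w:{0<..}|lborel. w powr (- \<beta> * (real k - real d / 4)) * g w)"

end

theory Submission imports Defs begin

lemma gamma_scaled:
  fixes p w :: real
  assumes p: "p > 0" and w: "w > 0"
  shows "(\<integral>\<^sup>+ s. ennreal (indicator {0<..} s * s powr (p-1) * exp(-s*w)) \<partial>lborel)
         = ennreal (Gamma p * w powr (-p))"
proof -
  let ?f = "\<lambda>t::real. ennreal (indicator {0..} t * t powr (p - 1) / exp t)"
  have "ennreal (Gamma p) = (\<integral>\<^sup>+ t. ?f t \<partial>lborel)"
    using Gamma_conv_nn_integral_real[OF p] by simp
  also have "\<dots> = ennreal \<bar>w\<bar> * (\<integral>\<^sup>+ s. ?f (0 + w * s) \<partial>lborel)"
    by (rule nn_integral_real_affine) (use w in auto)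
  also have "(\<lambda>s. ?f (0 + w * s)) = (\<lambda>s. ennreal (w powr (p-1)) * ennreal (indicator {0<..} s * s powr (p-1) * exp(-s*w)))"
  proof
    fix s :: real
    show "?f (0 + w * s) = ennreal (w powr (p-1)) * ennreal (indicator {0<..} s * s powr (p-1) * exp(-s*w))"
    proof (cases "s > 0")
      case True
      then show ?thesis using w
        by (simp add: powr_mult ennreal_mult'[symmetric] exp_minus field_simps indicator_def)
    next
      case False
      then show ?thesis using w
        by (cases "s = 0") (auto simp: indicator_def zero_le_mult_iff)
    qed
  qed
  also have "(\<integral>\<^sup>+ s. ennreal (w powr (p-1)) * ennreal (indicator {0<..} s * s powr (p-1) * exp(-s*w)) \<partial>lborel)
      = ennreal (w powr (p-1)) * (\<integral>\<^sup>+ s. ennreal (indicator {0<..} s * s powr (p-1) * exp(-s*w)) \<partial>lborel)"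
    by (rule nn_integral_cmult) auto
  finally have *: "ennreal (Gamma p) = ennreal (w powr p) * (\<integral>\<^sup>+ s. ennreal (indicator {0<..} s * s powr (p-1) * exp(-s*w)) \<partial>lborel)"
    using w by (simp add: mult.assoc[symmetric] ennreal_mult'[symmetric] powr_mult_base)
  have "ennreal (Gamma p * w powr (-p)) = ennreal (w powr (-p)) * ennreal (Gamma p)"
    using p by (simp add: ennreal_mult' mult.commute)
  also have "\<dots> = ennreal (w powr (-p) * w powr p) * (\<integral>\<^sup>+ s. ennreal (indicator {0<..} s * s powr (p-1) * exp(-s*w)) \<partial>lborel)"
    unfolding * by (simp add: ennreal_mult' mult.assoc)
  also have "w powr (-p) * w powr p = 1" using w by (simp add: powr_minus)
  finally show ?thesis by simp
qed

lemma gamma_powsub: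
  fixes q \<beta> :: real
  assumes q: "q > 0" and b: "\<beta> > 0"
  shows "(\<integral>\<^sup>+ s. ennreal (indicator {0<..} s * s powr (\<beta>*q - 1) * exp(-(s powr \<beta>))) \<partial>lborel)
         = ennreal (Gamma q / \<beta>)"
proof -
  define f where "f = (\<lambda>t::real. t powr (q - 1) / exp t)"
  have "(f has_integral Gamma q) {0..}" unfolding f_def by (rule Gamma_integral_real[OF q])
  hence "((\<lambda>t. if t \<in> {0<..} then f t else 0) has_integral Gamma q) {0..}"
    by (rule has_integral_spike [of "{0}", rotated 2]) auto
  hence A: "(f has_integral Gamma q) {0<..}"
    by (subst (asm) has_integral_restrict) auto
  have Aabs: "f absolutely_integrable_on {0<..}"
    using A unfolding f_def
    by (subst absolutely_integrable_on_iff_nonneg) (auto simp: has_integral_integrable)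
  define g where "g = (\<lambda>s::real. s powr \<beta>)"
  define g' where "g' = (\<lambda>s::real. \<beta> * s powr (\<beta> - 1))"
  have der: "(g has_field_derivative g' x) (at x within {0<..})" if "x \<in> {0<..}" for x
    unfolding g_def g'_def using that
    by (auto intro!: derivative_eq_intros)
  have inj: "inj_on g {0<..}"
  proof (rule inj_onI)
    fix x y :: real assume xy: "x \<in> {0<..}" "y \<in> {0<..}" "g x = g y"
    hence "(x powr \<beta>) powr (1/\<beta>) = (y powr \<beta>) powr (1/\<beta>)" by (simp add: g_def)
    thus "x = y" using xy b by (simp add: powr_powr)
  qed
  have img: "g ` {0<..} = {0<..}"
  proof (rule set_eqI, rule iffI)
    fix t assume "t \<in> g ` {0<..}" thus "t \<in> {0<..}" by (auto simp: g_def)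
  next
    fix t :: real assume t: "t \<in> {0<..}"
    hence "g (t powr (1/\<beta>)) = t" using b by (simp add: g_def powr_powr)
    moreover have "t powr (1/\<beta>) \<in> {0<..}" using t by simp
    ultimately show "t \<in> g ` {0<..}" by (metis image_eqI)
  qed
  have cv: "(\<lambda>x. \<bar>g' x\<bar> * f (g x)) absolutely_integrable_on {0<..} \<and>
            integral {0<..} (\<lambda>x. \<bar>g' x\<bar> * f (g x)) = Gamma q"
    using has_absolute_integral_change_of_variables_1'[of "{0<..}" g g' f "Gamma q", OF _ der inj]
    using Aabs A img by (auto simp: integral_unique)
  hence B: "((\<lambda>x. \<bar>g' x\<bar> * f (g x)) has_integral Gamma q) {0<..}"
    using absolutely_integrable_on_def integrable_integral by metis
  have eq: "\<bar>g' x\<bar> * f (g x) = \<beta> * (x powr (\<beta>*q - 1) * exp(-(x powr \<beta>)))" if "x \<in> {0<..}" for x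
  proof -
    have "\<bar>g' x\<bar> * f (g x) = \<beta> * (x powr (\<beta> - 1) * x powr (\<beta> * (q - 1))) * exp(-(x powr \<beta>))"
      using that b by (simp add: g'_def g_def f_def powr_powr exp_minus field_simps)
    also have "x powr (\<beta> - 1) * x powr (\<beta> * (q - 1)) = x powr (\<beta>*q - 1)"
      using that by (simp add: powr_add[symmetric] algebra_simps)
    finally show ?thesis by simp
  qed
  have C: "((\<lambda>x. \<beta> * (x powr (\<beta>*q - 1) * exp(-(x powr \<beta>)))) has_integral Gamma q) {0<..}"
    using B by (rule has_integral_eq[rotated]) (use eq in auto)
  have D: "((\<lambda>x. x powr (\<beta>*q - 1) * exp(-(x powr \<beta>))) has_integral Gamma q / \<beta>) {0<..}"
    using has_integral_mult_right[OF C, of "1/\<beta>"] b by simp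
  have "(\<integral>\<^sup>+ x. ennreal (x powr (\<beta>*q - 1) * exp(-(x powr \<beta>))) * indicator {0<..} x \<partial>lborel)
        = ennreal (Gamma q / \<beta>)"
    by (rule nn_integral_has_integral_lebesgue'[OF _ D]) auto
  moreover have "(\<integral>\<^sup>+ x. ennreal (x powr (\<beta>*q - 1) * exp(-(x powr \<beta>))) * indicator {0<..} x \<partial>lborel)
     = (\<integral>\<^sup>+ s. ennreal (indicator {0<..} s * s powr (\<beta>*q - 1) * exp(-(s powr \<beta>))) \<partial>lborel)"
    by (rule nn_integral_cong) (simp add: indicator_def)
  ultimately show ?thesis by simp
qed

lemma stable_moment:
  fixes \<beta> p :: real and g :: "real \<Rightarrow> real"
  assumes b: "0 < \<beta>" and gd: "positive_stable_density \<beta> g" and p: "p > 0"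
  shows "(LINT w:{0<..}|lborel. w powr (-p) * g w) = Gamma (p/\<beta>) / (\<beta> * Gamma p)"
proof -
  have gm[measurable]: "g \<in> borel_measurable borel" using gd
    by (simp add: positive_stable_density_def)
  have gnn: "\<And>w. g w \<ge> 0" using gd by (simp add: positive_stable_density_def)
  have L: "(\<integral>\<^sup>+ w. ennreal (indicator {0<..} w * (exp(-s*w) * g w)) \<partial>lborel) = ennreal (exp(-(s powr \<beta>)))"
    if s: "s \<ge> 0" for s
  proof -
    have "set_integrable lborel {0<..} (\<lambda>w. exp (- s * w) * g w)"
      and "(LINT w:{0<..}|lborel. exp (- s * w) * g w) = exp (- (s powr \<beta>))"
      using gd s by (auto simp: positive_stable_density_def)
    thus ?thesis
      unfolding set_integrable_def set_lebesgue_integral_def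
      by (subst nn_integral_eq_integral) (auto simp: gnn)
  qed
  define I where "I = (\<integral>\<^sup>+ w. ennreal (indicator {0<..} w * (w powr (-p) * g w)) \<partial>lborel)"
  define H where "H = (\<lambda>w s::real. ennreal (indicator {0<..} w * g w * (indicator {0<..} s * s powr (p-1) * exp(-s*w))))"
  have "ennreal (Gamma p) * I = (\<integral>\<^sup>+ w. ennreal (Gamma p) * ennreal (indicator {0<..} w * (w powr (-p) * g w)) \<partial>lborel)"
    unfolding I_def by (rule nn_integral_cmult[symmetric]) auto
  also have "\<dots> = (\<integral>\<^sup>+ w. \<integral>\<^sup>+ s. H w s \<partial>lborel \<partial>lborel)"
  proof (rule nn_integral_cong)
    fix w :: real
    show "ennreal (Gamma p) * ennreal (indicator {0<..} w * (w powr (-p) * g w)) = (\<integral>\<^sup>+ s. H w s \<partial>lborel)"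
    proof (cases "w > 0")
      case True
      have "ennreal (Gamma p) * ennreal (indicator {0<..} w * (w powr (-p) * g w))
          = ennreal (g w) * ennreal (Gamma p * w powr (-p))"
        using True p gnn[of w] by (simp add: ennreal_mult'[symmetric] mult_ac)
      also have "\<dots> = ennreal (g w) * (\<integral>\<^sup>+ s. ennreal (indicator {0<..} s * s powr (p-1) * exp(-s*w)) \<partial>lborel)"
        using gamma_scaled[OF p True] by simp
      also have "\<dots> = (\<integral>\<^sup>+ s. ennreal (g w) * ennreal (indicator {0<..} s * s powr (p-1) * exp(-s*w)) \<partial>lborel)"
        by (rule nn_integral_cmult[symmetric]) auto
      also have "\<dots> = (\<integral>\<^sup>+ s. H w s \<partial>lborel)"
        unfolding H_def using True gnn[of w]
        by (intro nn_integral_cong) (simp add: ennreal_mult'[symmetric])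
      finally show ?thesis .
    next
      case False
      thus ?thesis by (simp add: H_def)
    qed
  qed
  also have "\<dots> = (\<integral>\<^sup>+ s. \<integral>\<^sup>+ w. H w s \<partial>lborel \<partial>lborel)"
    unfolding H_def
    by (subst lborel_pair.Fubini') (auto simp: case_prod_unfold)
  also have "\<dots> = (\<integral>\<^sup>+ s. ennreal (indicator {0<..} s * s powr (p-1)) * ennreal (exp(-(s powr \<beta>))) \<partial>lborel)"
  proof (rule nn_integral_cong)
    fix s :: real
    show "(\<integral>\<^sup>+ w. H w s \<partial>lborel) = ennreal (indicator {0<..} s * s powr (p-1)) * ennreal (exp(-(s powr \<beta>)))"
    proof (cases "s > 0")
      case True
      have "(\<integral>\<^sup>+ w. H w s \<partial>lborel) = (\<integral>\<^sup>+ w. ennreal (indicator {0<..} s * s powr (p-1)) *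
              ennreal (indicator {0<..} w * (exp(-s*w) * g w)) \<partial>lborel)"
        unfolding H_def using True gnn
        by (intro nn_integral_cong) (simp add: ennreal_mult'[symmetric] mult_ac)
      also have "\<dots> = ennreal (indicator {0<..} s * s powr (p-1)) *
              (\<integral>\<^sup>+ w. ennreal (indicator {0<..} w * (exp(-s*w) * g w)) \<partial>lborel)"
        by (rule nn_integral_cmult) auto
      also have "\<dots> = ennreal (indicator {0<..} s * s powr (p-1)) * ennreal (exp(-(s powr \<beta>)))"
        using L[of s] True by simp
      finally show ?thesis .
    next
      case False
      thus ?thesis by (simp add: H_def)
    qed
  qed
  also have "\<dots> = (\<integral>\<^sup>+ s. ennreal (indicator {0<..} s * s powr (\<beta> * (p/\<beta>) - 1) * exp(-(s powr \<beta>))) \<partial>lborel)"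
    using b by (intro nn_integral_cong) (simp add: ennreal_mult'[symmetric])
  also have "\<dots> = ennreal (Gamma (p/\<beta>) / \<beta>)"
    by (rule gamma_powsub) (use p b in auto)
  finally have E: "ennreal (Gamma p) * I = ennreal (Gamma (p/\<beta>) / \<beta>)" .
  have Gp: "Gamma p > 0" using p by simp
  have "I = ennreal (1 / Gamma p) * (ennreal (Gamma p) * I)"
    using Gp by (simp add: mult.assoc[symmetric] ennreal_mult'[symmetric])
  also have "\<dots> = ennreal (Gamma (p/\<beta>) / (\<beta> * Gamma p))"
    unfolding E using Gp b by (simp add: ennreal_mult'[symmetric] mult.commute)
  finally have II: "I = ennreal (Gamma (p/\<beta>) / (\<beta> * Gamma p))" .
  have "(LINT w:{0<..}|lborel. w powr (-p) * g w) = enn2real I"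
    unfolding set_lebesgue_integral_def I_def
    by (subst integral_eq_nn_integral) (auto simp: gnn)
  also have "\<dots> = Gamma (p/\<beta>) / (\<beta> * Gamma p)"
    unfolding II using b Gp p by simp
  finally show ?thesis .
qed

lemma lnGamma_convex: "convex_on {0<..} (\<lambda>x::real. ln (Gamma x))"
  using log_convex_Gamma_real by (simp add: o_def)

lemma Gamma_le_fact:
  fixes x :: real and k :: nat
  assumes k: "k \<ge> 1" and x: "real k \<le> x" "x \<le> real k + 1"
  shows "Gamma x \<le> fact k"
proof -
  have cv: "convex_on {real k..real k + 1} (\<lambda>x::real. ln (Gamma x))"
    by (rule convex_on_subset[OF lnGamma_convex]) (use k in auto)
  have "ln (Gamma x) \<le> max (ln (Gamma (real k))) (ln (Gamma (real k + 1)))"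
    by (rule convex_on_le_max[OF cv]) (use x in auto)
  moreover have "Gamma (real k + 1) = fact k"
    using Gamma_fact[of k, where 'a=real] by (simp add: add.commute)
  moreover have "Gamma (real k) = fact (k - 1)"
    using Gamma_fact[of "k - 1", where 'a=real] k by (simp add: of_nat_diff)
  moreover have "(fact (k - 1) :: real) \<le> fact k"
    by (intro fact_mono) auto
  ultimately have "ln (Gamma x) \<le> ln (fact k)"
    by (smt (verit) fact_gt_zero ln_le_cancel_iff)
  thus ?thesis using x k by (subst (asm) ln_le_cancel_iff) auto
qed

lemma Gamma_half_shift:
  fixes p :: real assumes p: "p > 0"
  shows "Gamma (p + 1/2) \<le> sqrt pi * Gamma (p + 1)"
proof -
  let ?f = "\<lambda>x::real. ln (Gamma x)"
  have "(?f (1/2) - ?f 1) / (1/2 - 1) \<le> (?f (1/2) - ?f (p+1)) / (1/2 - (p+1))"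
    by (rule convex_on_slope_le(1)[OF lnGamma_convex]) (use p in auto)
  also have "\<dots> \<le> (?f (p+1/2) - ?f (p+1)) / ((p+1/2) - (p+1))"
    by (rule convex_on_slope_le(2)[OF lnGamma_convex]) (use p in auto)
  finally have "ln (Gamma (p + 1/2)) \<le> ln (sqrt pi) + ln (Gamma (p+1))"
    by (simp add: Gamma_one_half_real field_simps)
  also have "\<dots> = ln (sqrt pi * Gamma (p + 1))"
  proof -
    have "Gamma (p+1) > 0" using p by simp
    thus ?thesis by (simp add: ln_mult)
  qed
  finally show ?thesis using p
    by (subst (asm) ln_le_cancel_iff) auto
qed

lemma Gamma_dup_real:
  fixes z :: real assumes z: "z > 0"
  shows "Gamma z * Gamma (z + 1/2) = exp ((1 - 2*z) * ln 2) * sqrt pi * Gamma (2*z)"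
proof -
  have nz: "complex_of_real z \<notin> \<int>\<^sub>\<le>\<^sub>0" "complex_of_real z + 1/2 \<notin> \<int>\<^sub>\<le>\<^sub>0"
    using z by (auto elim!: nonpos_Ints_cases simp: complex_eq_iff)
  have "complex_of_real (Gamma z * Gamma (z + 1/2)) = complex_of_real (exp ((1 - 2*z) * ln 2) * sqrt pi * Gamma (2*z))"
    using Gamma_legendre_duplication[OF nz]
    by (simp add: Gamma_complex_of_real[symmetric] exp_of_real[symmetric])
  thus ?thesis by (simp only: of_real_eq_iff)
qed

lemma Gamma_dup_bound:
  fixes p :: real assumes p: "p > 0"
  shows "sqrt (Gamma (1 + 2*p)) \<le> 2 powr p * Gamma (1 + p)"
proof -
  have d: "Gamma (p + 1/2) * Gamma (p + 1/2 + 1/2) = exp ((1 - 2*(p+1/2)) * ln 2) * sqrt pi * Gamma (2*(p+1/2))"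
    by (rule Gamma_dup_real) (use p in auto)
  have e: "exp ((1 - (1 + 2*p)) * ln 2) = 1 / (2 powr p)^2"
    by (simp add: powr_def power2_eq_square exp_add[symmetric] exp_minus inverse_eq_divide mult_ac)
  have a1: "p + 1/2 + 1/2 = p + 1" and a2: "2*(p+1/2) = 1 + 2*p" by simp_all
  have d': "Gamma (p + 1/2) * Gamma (p + 1) = 1 / (2 powr p)^2 * sqrt pi * Gamma (1 + 2*p)"
    using d unfolding a1 a2 e .
  have G: "Gamma (1 + 2*p) = (2 powr p)^2 * Gamma (p + 1/2) * Gamma (p + 1) / sqrt pi"
    using d' by (simp add: field_simps)
  also have "\<dots> \<le> (2 powr p)^2 * (sqrt pi * Gamma (p + 1)) * Gamma (p + 1) / sqrt pi"
    using Gamma_half_shift[OF p] p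
    by (intro divide_right_mono mult_right_mono mult_left_mono) auto
  also have "\<dots> = (2 powr p * Gamma (1 + p))^2"
    by (simp add: power2_eq_square add.commute)
  finally show ?thesis
    using p by (intro real_le_lsqrt) auto
qed

lemma Gamma_low:
  fixes r :: real assumes r: "r > 0" "r \<le> 3/2"
  shows "2 powr r \<le> 9 * Gamma (1 + r)"
proof -
  have G2: "Gamma (2::real) = 1" using Gamma_fact[of 1, where 'a=real] by simp
  show ?thesis
proof (cases "r \<le> 1")
  case True
  have "Gamma (1 + r) \<ge> 1/2"
  proof (cases "r = 1")
    case True thus ?thesis using G2 by simp
  next
    case False
    let ?f = "\<lambda>x::real. ln (Gamma x)"
    have "(?f (1+r) - ?f 2) / ((1+r) - 2) \<le> (?f (1+r) - ?f 3) / ((1+r) - 3)"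
      by (rule convex_on_slope_le(1)[OF lnGamma_convex]) (use r True False in auto)
    also have "\<dots> \<le> (?f 2 - ?f 3) / (2 - 3)"
      by (rule convex_on_slope_le(2)[OF lnGamma_convex]) (use r True False in auto)
    finally have 1: "(?f (1+r) - ?f 2) / ((1+r) - 2) \<le> ln 2"
      using Gamma_fact[of 2, where 'a=real] G2 by (simp add: eval_nat_numeral)
    have "Gamma (2::real) = 1" using Gamma_fact[of 1, where 'a=real] by simp
    hence "?f (1+r) \<ge> (r - 1) * ln 2"
      using 1 True False by (simp add: field_simps)
    moreover have "(r - 1) * ln 2 \<ge> - ln 2" using r by (simp add: algebra_simps)
    ultimately have "ln (Gamma (1+r)) \<ge> ln (1/2)" by (simp add: ln_div)
    thus ?thesis using r by (subst (asm) ln_le_cancel_iff) auto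
  qed
  moreover have "2 powr r \<le> 2 powr 1" using True by (intro powr_mono) auto
  ultimately show ?thesis by simp
next
  case False
  have "Gamma (2::real) < Gamma (1 + r)"
    by (rule Gamma_real_strict_mono) (use False in auto)
  moreover have "Gamma (2::real) = 1" using Gamma_fact[of 1, where 'a=real] by simp
  moreover have "2 powr r \<le> 2 powr (2::real)" using r by (intro powr_mono) auto
  ultimately show ?thesis by simp
qed
qed

theorem lemma2p5:
  fixes \<beta> :: real and d k :: nat and g :: "real \<Rightarrow> real"
  assumes "0 < \<beta>" and "\<beta> < 1"
    and "d \<in> {1, 2, 3}"
    and "positive_stable_density \<beta> g"
    and "k \<ge> 1"
  shows "stable_moment_a g \<beta> d k * sqrt (Gamma (1 + \<beta> * (2 * real k - real d / 2))) / fact k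
         \<le> 3 * sqrt (2 * \<beta> * (real k - real d / 4)) * sqrt (Gamma (2 * \<beta> * (1 - real d / 4)))
             / Gamma (1 + \<beta>) * 2 powr (\<beta> * (real k - 1))"
proof -
  note b0 = assms(1) and b1 = assms(2) and gd = assms(4) and k = assms(5)
  have d1: "real d \<ge> 1" and d3: "real d \<le> 3" using assms(3) by auto
  have k1: "real k \<ge> 1" using k by simp
  define q where "q = real k - real d / 4"
  define p where "p = \<beta> * q"
  define r where "r = 2 * \<beta> * (1 - real d / 4)"
  have q0: "q > 0" "q \<ge> 1 - real d / 4" using d3 k1 by (auto simp: q_def)
  have p0: "p > 0" using q0 b0 by (simp add: p_def)
  have "\<beta> * (1 - real d/4) \<le> 1 * (3/4)" using d1 d3 b0 b1 by (intro mult_mono) auto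
  hence r0: "r > 0" "r \<le> 3/2" using d1 d3 b0 b1 by (auto simp: r_def)
  have rp: "r \<le> 2 * p" using q0 b0 by (simp add: r_def p_def)
  have a: "stable_moment_a g \<beta> d k = Gamma q / (\<beta> * Gamma p)"
  proof -
    have "stable_moment_a g \<beta> d k = (LINT w:{0<..}|lborel. w powr (-p) * g w)"
      unfolding stable_moment_a_def p_def q_def by simp
    also have "\<dots> = Gamma (p/\<beta>) / (\<beta> * Gamma p)"
      by (rule stable_moment[OF b0 gd p0])
    finally show ?thesis using b0 by (simp add: p_def)
  qed
  have a': "Gamma q / (\<beta> * Gamma p) = Gamma (1 + q) / Gamma (1 + p)"
  proof -
    have "q \<notin> \<int>\<^sub>\<le>\<^sub>0" "p \<notin> \<int>\<^sub>\<le>\<^sub>0" using q0 p0 nonpos_Ints_nonpos by fastforce+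
    hence e1: "Gamma (1 + q) = q * Gamma q" and e2: "Gamma (1 + p) = p * Gamma p"
      using Gamma_plus1[of q] Gamma_plus1[of p] by (simp_all add: add.commute)
    have "Gamma p > 0" using p0 by simp
    thus ?thesis unfolding e1 e2 using q0 b0 by (simp add: p_def field_simps)
  qed
  have Gq: "Gamma (1 + q) \<le> fact k"
    by (rule Gamma_le_fact[OF k]) (use d1 d3 in \<open>auto simp: q_def\<close>)
  have Gq0: "Gamma (1 + q) > 0" using q0 by simp
  have Gp0: "Gamma (1 + p) > 0" using p0 by simp
  have arg: "1 + \<beta> * (2 * real k - real d / 2) = 1 + 2 * p"
    by (simp add: p_def q_def algebra_simps)
  have LHS: "stable_moment_a g \<beta> d k * sqrt (Gamma (1 + \<beta> * (2 * real k - real d / 2))) / fact k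
      \<le> 2 powr p"
  proof -
    have "stable_moment_a g \<beta> d k * sqrt (Gamma (1 + \<beta> * (2 * real k - real d / 2))) / fact k
        = (Gamma (1 + q) / fact k) * (sqrt (Gamma (1 + 2*p)) / Gamma (1 + p))"
      unfolding a a' arg by simp
    also have "\<dots> \<le> 1 * (2 powr p)"
    proof (rule mult_mono)
      show "Gamma (1 + q) / fact k \<le> 1" using Gq by simp
      show "sqrt (Gamma (1 + 2*p)) / Gamma (1 + p) \<le> 2 powr p"
        using Gamma_dup_bound[OF p0] Gp0 by (simp add: divide_le_eq)
      have "Gamma (1 + 2*p) > 0" using p0 by simp
      thus "0 \<le> sqrt (Gamma (1 + 2*p)) / Gamma (1 + p)" using Gp0 by simp
    qed auto
    finally show ?thesis by simp
  qed
  have Gb: "Gamma (1 + \<beta>) \<le> 1" "Gamma (1 + \<beta>) > 0"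
    using Gamma_le_fact[of 1 "1 + \<beta>"] b0 b1 by auto
  have Gr: "Gamma r > 0" using r0 by simp
  have "2 powr (r/2) = sqrt (2 powr r)"
    by (simp add: powr_half_sqrt[symmetric] powr_powr)
  also have "\<dots> \<le> sqrt (9 * Gamma (1 + r))"
    using Gamma_low[OF r0] by simp
  also have "\<dots> = 3 * sqrt (r * Gamma r)"
  proof -
    have "r \<notin> \<int>\<^sub>\<le>\<^sub>0" using r0 nonpos_Ints_nonpos by fastforce
    hence "Gamma (1 + r) = r * Gamma r" using Gamma_plus1[of r] by (simp add: add.commute)
    thus ?thesis by (simp add: real_sqrt_mult)
  qed
  also have "\<dots> \<le> 3 * sqrt (2 * p * Gamma r)"
    using rp Gr by (simp add: mult_right_mono)
  also have "\<dots> = 3 * sqrt (2 * p) * sqrt (Gamma r)"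
    by (simp add: real_sqrt_mult)
  also have "\<dots> \<le> 3 * sqrt (2 * p) * sqrt (Gamma r) / Gamma (1 + \<beta>)"
    using Gb Gr p0 by (simp add: le_divide_eq mult_left_le)
  finally have R: "2 powr (r/2) \<le> 3 * sqrt (2 * p) * sqrt (Gamma r) / Gamma (1 + \<beta>)" .
  have "p = r/2 + \<beta> * (real k - 1)" by (simp add: r_def p_def q_def field_simps)
  hence "2 powr p = 2 powr (r/2) * 2 powr (\<beta> * (real k - 1))"
    by (simp add: powr_add[symmetric])
  also have "\<dots> \<le> 3 * sqrt (2 * p) * sqrt (Gamma r) / Gamma (1 + \<beta>) * 2 powr (\<beta> * (real k - 1))"
    using R by (rule mult_right_mono) simp
  finally have "2 powr p \<le> 3 * sqrt (2 * p) * sqrt (Gamma r) / Gamma (1 + \<beta>) * 2 powr (\<beta> * (real k - 1))" .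
  moreover have "2 * p = 2 * \<beta> * (real k - real d / 4)" by (simp add: p_def q_def)
  ultimately show ?thesis using LHS unfolding r_def by simp
qed

end
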